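(* Let $\mathcal{A}$ be a finite abelian group and $\mathbb{M}$ a monoid. Every probability measure on $\mathcal{A}^{\mathbb{M}}$ is a weak* limit of harmonically mixing probability measures on $\mathcal{A}^{\mathbb{M}}$; i.e. the harmonically mixing measures are weak* dense in the space of probability measures on $\mathcal{A}^{\mathbb{M}}$.
   Context: Characters of $\mathcal{A}^{\mathbb{M}}$ are $\chi=\bigotimes_{m}\chi_m$ with $\chi_m$ characters of $\mathcal{A}$, all but finitely many trivial; rank$(\chi)$ is the number of nontrivial $\chi_m$. A measure $\mu$ is harmonically mixing if for every $\varepsilon>0$ there is $R$ such that rank$(\chi)>R$ implies $|\int\chi\,d\mu|<\varepsilon$. *)

theory Defs
  imports "HOL-Analysis.Analysis" "HOL-Probability.Probability"
begin

definition group_character :: "('a::ab_group_add \<Rightarrow> complex) \<Rightarrow> bool" where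
  "group_character \<psi> \<longleftrightarrow> (\<forall>a b. \<psi> (a + b) = \<psi> a * \<psi> b) \<and> (\<forall>a. norm (\<psi> a) = 1)"

text \<open>A family of characters of A indexed by M, all but finitely many trivial;
  it determines the character chi = tensor of the chi_m of A^M.\<close>
definition char_family :: "('m \<Rightarrow> 'a::ab_group_add \<Rightarrow> complex) \<Rightarrow> bool" where
  "char_family c \<longleftrightarrow> (\<forall>m. group_character (c m)) \<and> finite {m. c m \<noteq> (\<lambda>_. 1)}"

definition char_support :: "('m \<Rightarrow> 'a \<Rightarrow> complex) \<Rightarrow> 'm set" where
  "char_support c = {m. c m \<noteq> (\<lambda>_. 1)}"

definition prod_char :: "('m \<Rightarrow> 'a \<Rightarrow> complex) \<Rightarrow> ('m \<Rightarrow> 'a) \<Rightarrow> complex" where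
  "prod_char c x = (\<Prod>m\<in>char_support c. c m (x m))"

definition char_rank :: "('m \<Rightarrow> 'a \<Rightarrow> complex) \<Rightarrow> nat" where
  "char_rank c = card (char_support c)"

definition full_shift_space :: "('m \<Rightarrow> 'a) measure" where
  "full_shift_space = Pi\<^sub>M UNIV (\<lambda>_. count_space UNIV)"

definition full_shift_topology :: "('m \<Rightarrow> 'a) topology" where
  "full_shift_topology = product_topology (\<lambda>_. discrete_topology UNIV) UNIV"

definition prob_on_shift :: "('m \<Rightarrow> 'a) measure \<Rightarrow> bool" where
  "prob_on_shift \<mu> \<longleftrightarrow> prob_space \<mu> \<and> sets \<mu> = sets full_shift_space"

definition harmonically_mixing :: "('m \<Rightarrow> 'a::ab_group_add) measure \<Rightarrow> bool" where
  "harmonically_mixing \<mu> \<longleftrightarrow>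
     (\<forall>\<epsilon>>0. \<exists>R::nat. \<forall>c::'m \<Rightarrow> 'a \<Rightarrow> complex.
        char_family c \<and> char_rank c > R \<longrightarrow> norm (integral\<^sup>L \<mu> (prod_char c)) < \<epsilon>)"

definition weak_star_adherent :: "('m \<Rightarrow> 'a) measure set \<Rightarrow> ('m \<Rightarrow> 'a) measure \<Rightarrow> bool" where
  "weak_star_adherent P \<mu> \<longleftrightarrow>
     (\<forall>F \<epsilon>. finite F \<and> (\<forall>f\<in>F. continuous_map full_shift_topology euclideanreal f) \<and> \<epsilon> > 0 \<longrightarrow>
        (\<exists>\<nu>\<in>P. \<forall>f\<in>F. \<bar>integral\<^sup>L \<nu> f - integral\<^sup>L \<mu> f\<bar> < \<epsilon>))"

end

theory Submission
  imports Defs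
begin


lemma topspace_fs: "topspace (full_shift_topology :: ('m \<Rightarrow> 'a) topology) = UNIV"
  unfolding full_shift_topology_def by (auto simp: topspace_product_topology PiE_UNIV_domain)

lemma compact_fs: "compact_space (full_shift_topology :: ('m \<Rightarrow> 'a::finite) topology)"
  unfolding full_shift_topology_def
  by (simp add: compact_space_product_topology compact_space_discrete_topology)

lemma approx_finite:
  fixes f :: "('m \<Rightarrow> 'a::finite) \<Rightarrow> real"
  assumes f: "continuous_map full_shift_topology euclideanreal f" and e: "e > 0"
  shows "\<exists>N. finite N \<and> (\<forall>x y. (\<forall>m\<in>N. x m = y m) \<longrightarrow> \<bar>f x - f y\<bar> < e)"
proof -
  have "\<forall>x. \<exists>U. finite {i. U i \<noteq> UNIV} \<and> x \<in> Pi\<^sub>E UNIV U \<and> Pi\<^sub>E UNIV U \<subseteq> {y. \<bar>f y - f x\<bar> < e/2}"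
  proof
    fix x
    have "openin full_shift_topology {y \<in> topspace full_shift_topology. f y \<in> {z. \<bar>z - f x\<bar> < e/2}}"
    proof -
      have "{z::real. \<bar>z - f x\<bar> < e/2} = ball (f x) (e/2)"
        by (auto simp: dist_real_def abs_minus_commute)
      hence "open {z::real. \<bar>z - f x\<bar> < e/2}" by simp
      thus ?thesis using openin_continuous_map_preimage[OF f, of "{z::real. \<bar>z - f x\<bar> < e/2}"] by simp
    qed
    hence o: "openin full_shift_topology {y. \<bar>f y - f x\<bar> < e/2}" by (simp add: topspace_fs)
    have "x \<in> {y. \<bar>f y - f x\<bar> < e/2}" using e by simp
    with o show "\<exists>U. finite {i. U i \<noteq> UNIV} \<and> x \<in> Pi\<^sub>E UNIV U \<and> Pi\<^sub>E UNIV U \<subseteq> {y. \<bar>f y - f x\<bar> < e/2}"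
      unfolding full_shift_topology_def openin_product_topology_alt by auto
  qed
  then obtain U where U: "\<And>x. finite {i. U x i \<noteq> UNIV}" "\<And>x. x \<in> Pi\<^sub>E UNIV (U x)"
     "\<And>x. Pi\<^sub>E UNIV (U x) \<subseteq> {y. \<bar>f y - f x\<bar> < e/2}" by metis
  have op: "openin full_shift_topology (Pi\<^sub>E UNIV (U x))" for x
    unfolding full_shift_topology_def openin_product_topology_alt using U(1)[of x] by auto
  have cov: "UNIV \<subseteq> (\<Union>x. Pi\<^sub>E UNIV (U x))" using U(2) by blast
  obtain \<F> where F: "finite \<F>" "\<F> \<subseteq> range (\<lambda>x. Pi\<^sub>E UNIV (U x))" "UNIV \<subseteq> \<Union>\<F>"
    using compact_fs[unfolded compact_space_alt, rule_format, of "range (\<lambda>x. Pi\<^sub>E UNIV (U x))"]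
    using op cov by (auto simp: topspace_fs)
  then obtain X where X: "finite X" "\<F> = (\<lambda>x. Pi\<^sub>E UNIV (U x)) ` X"
    by (meson finite_subset_image)
  define N where "N = (\<Union>x\<in>X. {i. U x i \<noteq> UNIV})"
  have "finite N" unfolding N_def using X U(1) by auto
  moreover have "\<bar>f y - f z\<bar> < e" if agree: "\<forall>m\<in>N. y m = z m" for y z
  proof -
    obtain x where x: "x \<in> X" "y \<in> Pi\<^sub>E UNIV (U x)" using F(3) X(2) by blast
    have "z \<in> Pi\<^sub>E UNIV (U x)"
    proof -
      have "z i \<in> U x i" for i
      proof (cases "U x i = UNIV")
        case False
        hence "i \<in> N" unfolding N_def using x by auto
        thus ?thesis using agree x(2) by (metis PiE_E UNIV_I)
      qed auto
      thus ?thesis by auto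
    qed
    hence "\<bar>f z - f x\<bar> < e/2" "\<bar>f y - f x\<bar> < e/2" using U(3)[of x] x(2) by auto
    thus ?thesis by linarith
  qed
  ultimately show ?thesis by blast
qed



lemma char_sum_zero:
  fixes \<psi> :: "'a::{finite,ab_group_add} \<Rightarrow> complex"
  assumes g: "group_character \<psi>" and nt: "\<psi> \<noteq> (\<lambda>_. 1)"
  shows "(\<Sum>a\<in>UNIV. \<psi> a) = 0"
proof -
  obtain b where b: "\<psi> b \<noteq> 1" using nt by auto
  have "(\<Sum>a\<in>UNIV. \<psi> a) = (\<Sum>a\<in>UNIV. \<psi> (a + b))"
    by (rule sum.reindex_bij_witness[where i="\<lambda>a. a + b" and j="\<lambda>a. a - b"]) auto
  also have "\<dots> = \<psi> b * (\<Sum>a\<in>UNIV. \<psi> a)"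
    using g by (simp add: group_character_def sum_distrib_left mult.commute)
  finally have "(1 - \<psi> b) * (\<Sum>a\<in>UNIV. \<psi> a) = 0" by (simp add: algebra_simps)
  thus ?thesis using b by simp
qed

lemma unif_int_zero:
  fixes \<psi> :: "'a::{finite,ab_group_add} \<Rightarrow> complex"
  assumes g: "group_character \<psi>" and nt: "\<psi> \<noteq> (\<lambda>_. 1)"
  shows "integral\<^sup>L (uniform_count_measure UNIV) \<psi> = 0"
  proof -
  have "integral\<^sup>L (uniform_count_measure (UNIV::'a set)) \<psi> = (\<Sum>x\<in>UNIV. (1 / card (UNIV::'a set)) *\<^sub>R \<psi> x)"
    by (simp add: uniform_count_measure_def lebesgue_integral_point_measure_finite)
  also have "\<dots> = (1 / card (UNIV::'a set)) *\<^sub>R (\<Sum>x\<in>UNIV. \<psi> x)"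
    by (simp add: scaleR_sum_right)
  finally show ?thesis using char_sum_zero[OF assms] by simp
qed

lemma lam_prod_zero:
  fixes c :: "'m \<Rightarrow> 'a::{finite,ab_group_add} \<Rightarrow> complex"
  assumes J: "finite J" "m0 \<in> J" and g: "\<And>m. group_character (c m)" and nt: "c m0 \<noteq> (\<lambda>_. 1)"
  shows "integral\<^sup>L (Pi\<^sub>M UNIV (\<lambda>_. uniform_count_measure (UNIV::'a set))) (\<lambda>y. \<Prod>m\<in>J. c m (y m)) = 0"
proof -
  define U where "U = uniform_count_measure (UNIV::'a set)"
  have PU: "prob_space U" unfolding U_def by (rule prob_space_uniform_count_measure) auto
  interpret product_prob_space "\<lambda>_::'m. U" UNIV
    using PU by (simp add: product_prob_space_def product_prob_space_axioms_def product_sigma_finite_def prob_space_imp_sigma_finite)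
  have sU: "sets U = sets (count_space UNIV)" unfolding U_def by (rule sets_uniform_count_measure_count_space)
  have cm: "c m \<in> borel_measurable U" for m
    using borel_measurable_count_space[of "c m" UNIV] measurable_cong_sets[OF sU refl, of borel] by blast
  have intU: "integrable U (c m)" for m
  proof (rule finite_measure.integrable_const_bound[OF prob_space.axioms(1)[OF PU], where B=1])
    show "AE x in U. norm (c m x) \<le> 1" using g by (simp add: group_character_def)
  qed (rule cm)
  have meas: "(\<lambda>z. \<Prod>m\<in>J. c m (z m)) \<in> borel_measurable (Pi\<^sub>M J (\<lambda>_. U))"
  proof (rule borel_measurable_prod)
    fix m assume "m \<in> J"
    hence "(\<lambda>z::'m\<Rightarrow>'a. z m) \<in> Pi\<^sub>M J (\<lambda>_. U) \<rightarrow>\<^sub>M U"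
      by (rule measurable_component_singleton)
    thus "(\<lambda>z::'m\<Rightarrow>'a. c m (z m)) \<in> borel_measurable (Pi\<^sub>M J (\<lambda>_. U))"
      by (rule measurable_compose) (rule cm)
  qed
  have rm: "(\<lambda>y. restrict y J) \<in> Pi\<^sub>M UNIV (\<lambda>_. U) \<rightarrow>\<^sub>M Pi\<^sub>M J (\<lambda>_. U)"
    by (rule measurable_restrict_subset) simp
  have "integral\<^sup>L (Pi\<^sub>M UNIV (\<lambda>_. U)) (\<lambda>y. \<Prod>m\<in>J. c m (y m))
      = integral\<^sup>L (Pi\<^sub>M UNIV (\<lambda>_. U)) (\<lambda>y. (\<lambda>z. \<Prod>m\<in>J. c m (z m)) (restrict y J))"
    by (rule Bochner_Integration.integral_cong[OF refl]) (simp add: restrict_def)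
  also have "\<dots> = integral\<^sup>L (distr (Pi\<^sub>M UNIV (\<lambda>_. U)) (Pi\<^sub>M J (\<lambda>_. U)) (\<lambda>y. restrict y J)) (\<lambda>z. \<Prod>m\<in>J. c m (z m))"
    by (rule integral_distr[OF rm meas, symmetric])
  also have "distr (Pi\<^sub>M UNIV (\<lambda>_. U)) (Pi\<^sub>M J (\<lambda>_. U)) (\<lambda>y. restrict y J) = Pi\<^sub>M J (\<lambda>_. U)"
    by (rule distr_PiM_restrict_finite[OF J(1)]) simp
  also have "integral\<^sup>L (Pi\<^sub>M J (\<lambda>_. U)) (\<lambda>z. \<Prod>m\<in>J. c m (z m)) = (\<Prod>m\<in>J. integral\<^sup>L U (c m))"
    by (rule product_integral_prod[OF J(1) intU])
  also have "\<dots> = 0"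
  proof (rule prod_zero[OF J(1)])
    show "\<exists>m\<in>J. integral\<^sup>L U (c m) = 0"
      using J(2) unif_int_zero[OF g nt] unfolding U_def by blast
  qed
  finally show ?thesis unfolding U_def .
qed



lemma sets_Lam: "sets (Pi\<^sub>M UNIV (\<lambda>_. uniform_count_measure (UNIV::'a set))) = sets (full_shift_space :: ('m\<Rightarrow>'a) measure)"
  unfolding full_shift_space_def by (rule sets_PiM_cong) (auto simp: sets_uniform_count_measure_count_space)

lemma prob_Lam: "prob_space (Pi\<^sub>M UNIV (\<lambda>_::'m. uniform_count_measure (UNIV::'a::finite set)))"
  by (intro prob_space_PiM prob_space_uniform_count_measure) auto

lemma meas_merge: "(\<lambda>p. \<lambda>m. if m \<in> N then fst p m else snd p m) \<in> measurable (full_shift_space \<Otimes>\<^sub>M full_shift_space) (full_shift_space :: ('m\<Rightarrow>'a) measure)"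
  unfolding full_shift_space_def
proof (rule measurable_PiM_single')
  fix m :: 'm
  show "(\<lambda>p. if m \<in> N then fst p m else snd p m) \<in> Pi\<^sub>M UNIV (\<lambda>_. count_space UNIV) \<Otimes>\<^sub>M Pi\<^sub>M UNIV (\<lambda>_. count_space UNIV) \<rightarrow>\<^sub>M (count_space (UNIV::'a set))"
    by (cases "m \<in> N") (auto intro!: measurable_compose[OF measurable_fst measurable_component_singleton] measurable_compose[OF measurable_snd measurable_component_singleton])
qed (auto simp: space_PiM)

lemma meas_pc: "prod_char c \<in> borel_measurable (full_shift_space :: ('m\<Rightarrow>'a) measure)"
  unfolding prod_char_def full_shift_space_def
proof (intro borel_measurable_prod)
  fix m
  have "(\<lambda>x::'m\<Rightarrow>'a. x m) \<in> Pi\<^sub>M UNIV (\<lambda>_. count_space UNIV) \<rightarrow>\<^sub>M count_space UNIV"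
    by (rule measurable_component_singleton) simp
  thus "(\<lambda>x::'m\<Rightarrow>'a. c m (x m)) \<in> borel_measurable (Pi\<^sub>M UNIV (\<lambda>_. count_space UNIV))"
    by (rule measurable_compose) simp
qed

lemma meas_proj:
  fixes h :: "('m \<Rightarrow> 'a::{finite,zero}) \<Rightarrow> real"
  assumes N: "finite N"
  shows "(\<lambda>x. h (\<lambda>m. if m\<in>N then x m else 0)) \<in> borel_measurable (full_shift_space :: ('m\<Rightarrow>'a) measure)"
proof -
  define proj where "proj = (\<lambda>x::'m\<Rightarrow>'a. \<lambda>m. if m\<in>N then x m else 0)"
  define P where "P = (\<lambda>z::'m\<Rightarrow>'a. \<lambda>m. if m\<in>N then z m else 0) ` (Pi\<^sub>E N (\<lambda>_. UNIV))"
  have fP: "finite P" unfolding P_def using N by (intro finite_imageI finite_PiE) auto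
  have inP: "proj x \<in> P" for x
    unfolding P_def proj_def by (rule image_eqI[where x="restrict x N"]) auto
  have pre: "proj -` {y} \<inter> space full_shift_space \<in> sets (full_shift_space :: ('m\<Rightarrow>'a) measure)" if "y \<in> P" for y
  proof -
    have "proj -` {y} \<inter> space full_shift_space = {x \<in> space (full_shift_space :: ('m\<Rightarrow>'a) measure). \<forall>m\<in>N. x m = y m}"
      using that unfolding P_def proj_def by (auto simp: fun_eq_iff; metis)
    also have "\<dots> \<in> sets full_shift_space"
      unfolding full_shift_space_def using N by measurable
    finally show ?thesis .
  qed
  have "proj \<in> measurable full_shift_space (count_space P)"
    using fP inP pre by (subst measurable_count_space_eq2) auto
  hence "(\<lambda>x. h (proj x)) \<in> borel_measurable (full_shift_space :: ('m\<Rightarrow>'a) measure)"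
    by (rule measurable_compose) simp
  thus ?thesis unfolding proj_def .
qed

lemma int_pair:
  fixes h :: "_ \<Rightarrow> 'b::{banach, second_countable_topology}"
  assumes P1: "prob_space M1" and P2: "prob_space M2" and h: "h \<in> borel_measurable (M1 \<Otimes>\<^sub>M M2)"
    and B: "\<And>p. norm (h p) \<le> B"
  shows "integral\<^sup>L (M1 \<Otimes>\<^sub>M M2) h = (\<integral>x. (\<integral>y. h (x,y) \<partial>M2) \<partial>M1)"
proof -
  interpret pair_prob_space M1 M2
    using P1 P2 by (simp add: pair_prob_space_def pair_sigma_finite_def prob_space_imp_sigma_finite)
  have "integrable (M1 \<Otimes>\<^sub>M M2) h"
    by (rule integrable_const_bound[where B=B]) (use B h in auto)
  from integral_fst'[OF this] show ?thesis by simp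
qed



lemma close_int:
  fixes f g :: "_ \<Rightarrow> real"
  assumes P: "prob_space M" and fm: "f \<in> borel_measurable M" and gm: "g \<in> borel_measurable M"
    and fg: "\<And>x. \<bar>f x - g x\<bar> \<le> e" and B: "\<And>x. \<bar>g x\<bar> \<le> B"
  shows "\<bar>integral\<^sup>L M f - integral\<^sup>L M g\<bar> \<le> e"
proof -
  interpret prob_space M by (rule P)
  have ig: "integrable M g" by (rule integrable_const_bound[where B=B]) (use B gm in auto)
  have fb: "\<bar>f x\<bar> \<le> B + e" for x using fg[of x] B[of x] by linarith
  have if': "integrable M f" by (rule integrable_const_bound[where B="B+e"]) (use fb fm in auto)
  have "\<bar>integral\<^sup>L M f - integral\<^sup>L M g\<bar> = \<bar>integral\<^sup>L M (\<lambda>x. f x - g x)\<bar>"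
    using ig if' by simp
  also have "\<dots> \<le> integral\<^sup>L M (\<lambda>x. \<bar>f x - g x\<bar>)" by (rule integral_abs_bound)
  also have "\<dots> \<le> integral\<^sup>L M (\<lambda>x. e)"
    by (rule integral_mono) (use ig if' fg in auto)
  also have "\<dots> = e" by (simp add: prob_space)
  finally show ?thesis .
qed

theorem mainTheorem5:
  fixes \<mu> :: "('m::monoid_mult \<Rightarrow> 'a::{finite, ab_group_add}) measure"
  assumes "prob_on_shift \<mu>"
  shows "weak_star_adherent {\<nu>. prob_on_shift \<nu> \<and> harmonically_mixing \<nu>} \<mu>"
proof -
  have Pmu: "prob_space \<mu>" and Smu: "sets \<mu> = sets full_shift_space"
    using assms by (auto simp: prob_on_shift_def)
  show ?thesis unfolding weak_star_adherent_def
  proof (intro allI impI, elim conjE)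
    fix F :: "(('m\<Rightarrow>'a) \<Rightarrow> real) set" and \<epsilon> :: real
    assume Ff: "finite F" and Fc: "\<forall>f\<in>F. continuous_map full_shift_topology euclideanreal f"
      and ep: "\<epsilon> > 0"
    define e where "e = \<epsilon>/3"
    have e: "e > 0" using ep by (simp add: e_def)
    have "\<forall>f\<in>F. \<exists>N. finite N \<and> (\<forall>x y. (\<forall>m\<in>N. x m = y m) \<longrightarrow> \<bar>f x - f y\<bar> < e)"
      using Fc approx_finite e by blast
    then obtain Nf where Nf: "\<forall>f\<in>F. finite (Nf f) \<and> (\<forall>x y. (\<forall>m\<in>Nf f. x m = y m) \<longrightarrow> \<bar>f x - f y\<bar> < e)"
      by (metis bchoice)
    define N where "N = \<Union>(Nf ` F)"
    have fN: "finite N" using Ff Nf unfolding N_def by auto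
    have agree: "\<bar>f x - f y\<bar> < e" if "f\<in>F" "\<forall>m\<in>N. x m = y m" for f x y
      using Nf that unfolding N_def by blast
    define \<Lambda> where "\<Lambda> = (Pi\<^sub>M UNIV (\<lambda>_::'m. uniform_count_measure (UNIV::'a set)))"
    have P\<Lambda>: "prob_space \<Lambda>" unfolding \<Lambda>_def by (rule prob_Lam)
    have S\<Lambda>: "sets \<Lambda> = sets (full_shift_space :: ('m\<Rightarrow>'a) measure)" unfolding \<Lambda>_def by (rule sets_Lam)
    define mg where "mg = (\<lambda>p::('m\<Rightarrow>'a)\<times>('m\<Rightarrow>'a). \<lambda>m. if m \<in> N then fst p m else snd p m)"
    have Spair: "sets (\<mu> \<Otimes>\<^sub>M \<Lambda>) = sets (full_shift_space \<Otimes>\<^sub>M full_shift_space)"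
      using Smu S\<Lambda> by (rule sets_pair_measure_cong)
    have mgm: "mg \<in> measurable (\<mu> \<Otimes>\<^sub>M \<Lambda>) full_shift_space"
      unfolding mg_def using meas_merge measurable_cong_sets[OF Spair refl] by blast
    interpret PP: pair_prob_space \<mu> \<Lambda>
      using Pmu P\<Lambda> by (simp add: pair_prob_space_def pair_sigma_finite_def prob_space_imp_sigma_finite)
    define \<nu> where "\<nu> = distr (\<mu> \<Otimes>\<^sub>M \<Lambda>) full_shift_space mg"
    have P\<nu>: "prob_space \<nu>" unfolding \<nu>_def by (rule PP.prob_space_distr[OF mgm])
    have S\<nu>: "sets \<nu> = sets full_shift_space" unfolding \<nu>_def by simp
    have hm: "harmonically_mixing \<nu>"
      unfolding harmonically_mixing_def
    proof (intro allI impI exI[of _ "card N"])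
      fix \<epsilon>' :: real and c :: "'m \<Rightarrow> 'a \<Rightarrow> complex"
      assume ep': "\<epsilon>' > 0" and cc: "char_family c \<and> card N < char_rank c"
      define S where "S = char_support c"
      have fS: "finite S" and g: "\<And>m. group_character (c m)"
        using cc by (auto simp: char_family_def S_def char_support_def)
      have "\<not> S \<subseteq> N"
      proof
        assume "S \<subseteq> N"
        hence "card S \<le> card N" by (rule card_mono[OF fN])
        with cc show False by (simp add: char_rank_def S_def)
      qed
      then obtain m0 where m0: "m0 \<in> S" "m0 \<notin> N" by auto
      have nt: "c m0 \<noteq> (\<lambda>_. 1)" using m0 by (simp add: S_def char_support_def)
      have split: "prod_char c (mg (x,y)) = (\<Prod>m\<in>S\<inter>N. c m (x m)) * (\<Prod>m\<in>S-N. c m (y m))" for x y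
      proof -
        have "prod_char c (mg (x,y)) = (\<Prod>m\<in>S. c m (mg (x,y) m))" by (simp add: prod_char_def S_def)
        also have "\<dots> = (\<Prod>m\<in>S\<inter>N. c m (mg (x,y) m)) * (\<Prod>m\<in>S-N. c m (mg (x,y) m))"
          using fS by (rule prod.Int_Diff)
        also have "\<dots> = (\<Prod>m\<in>S\<inter>N. c m (x m)) * (\<Prod>m\<in>S-N. c m (y m))"
          by (auto simp: mg_def intro!: arg_cong2[where f="(*)"] prod.cong)
        finally show ?thesis .
      qed
      have bnd: "norm (prod_char c z) \<le> 1" for z
        using g by (simp add: prod_char_def prod_norm[symmetric] group_character_def)
      have "integral\<^sup>L \<nu> (prod_char c) = integral\<^sup>L (\<mu> \<Otimes>\<^sub>M \<Lambda>) (\<lambda>p. prod_char c (mg p))"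
        unfolding \<nu>_def by (rule integral_distr[OF mgm meas_pc])
      also have "\<dots> = (\<integral>x. (\<integral>y. prod_char c (mg (x,y)) \<partial>\<Lambda>) \<partial>\<mu>)"
        by (rule int_pair[OF Pmu P\<Lambda>]) (auto intro: measurable_compose[OF mgm meas_pc] bnd)
      also have "\<dots> = (\<integral>x. (\<Prod>m\<in>S\<inter>N. c m (x m)) * (\<integral>y. (\<Prod>m\<in>S-N. c m (y m)) \<partial>\<Lambda>) \<partial>\<mu>)"
        by (simp add: split)
      also have "(\<integral>y. (\<Prod>m\<in>S-N. c m (y m)) \<partial>\<Lambda>) = 0"
        unfolding \<Lambda>_def using lam_prod_zero[of "S-N" m0 c] fS m0 g nt by auto
      finally have "integral\<^sup>L \<nu> (prod_char c) = 0" by simp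
      thus "norm (integral\<^sup>L \<nu> (prod_char c)) < \<epsilon>'" using ep' by simp
    qed
    have close: "\<forall>f\<in>F. \<bar>integral\<^sup>L \<nu> f - integral\<^sup>L \<mu> f\<bar> < \<epsilon>"
    proof
      fix f assume fF: "f \<in> F"
      define proj where "proj = (\<lambda>x::'m\<Rightarrow>'a. \<lambda>m. if m\<in>N then x m else 0)"
      define g where "g = (\<lambda>x. f (proj x))"
      have gm: "g \<in> borel_measurable full_shift_space"
        unfolding g_def proj_def by (rule meas_proj[OF fN])
      have fg: "\<bar>f x - g x\<bar> \<le> e" for x
        using agree[OF fF, of x "proj x"] unfolding g_def proj_def by auto
      have "proj x \<in> (\<lambda>z m. if m\<in>N then z m else 0) ` (N \<rightarrow>\<^sub>E UNIV)" for x
        by (rule image_eqI[where x="restrict x N"]) (auto simp: proj_def)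
      hence "range proj \<subseteq> (\<lambda>z m. if m\<in>N then z m else 0) ` (N \<rightarrow>\<^sub>E UNIV)" by auto
      moreover have "finite ((\<lambda>z m. if m\<in>N then z m else (0::'a)) ` (N \<rightarrow>\<^sub>E UNIV))"
        using fN by (intro finite_imageI finite_PiE) auto
      ultimately have "finite (range proj)" by (rule finite_subset)
      hence fin_g: "finite (range g)" unfolding g_def by (metis finite_imageI image_image)
      define B where "B = Max (abs ` range g)"
      have B: "\<bar>g x\<bar> \<le> B" for x unfolding B_def using fin_g by (intro Max_ge) auto
      have pm: "proj (mg (x,y)) = proj x" for x y by (auto simp: proj_def mg_def)
      have gnu: "integral\<^sup>L \<nu> g = integral\<^sup>L \<mu> g"
      proof -
        have "integral\<^sup>L \<nu> g = integral\<^sup>L (\<mu> \<Otimes>\<^sub>M \<Lambda>) (\<lambda>p. g (mg p))"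
          unfolding \<nu>_def by (rule integral_distr[OF mgm gm])
        also have "\<dots> = (\<integral>x. (\<integral>y. g (mg (x,y)) \<partial>\<Lambda>) \<partial>\<mu>)"
          by (rule int_pair[OF Pmu P\<Lambda>]) (auto intro: measurable_compose[OF mgm gm] B)
        also have "\<dots> = (\<integral>x. g x \<partial>\<mu>)"
          by (simp add: g_def pm prob_space.prob_space[OF P\<Lambda>])
        finally show ?thesis .
      qed
      show "\<bar>integral\<^sup>L \<nu> f - integral\<^sup>L \<mu> f\<bar> < \<epsilon>"
      proof (cases "f \<in> borel_measurable full_shift_space")
        case True
        have fn: "f \<in> borel_measurable \<nu>" "g \<in> borel_measurable \<nu>"
          using True gm measurable_cong_sets[OF S\<nu> refl] by auto
        have fmu: "f \<in> borel_measurable \<mu>" "g \<in> borel_measurable \<mu>"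
          using True gm measurable_cong_sets[OF Smu refl] by auto
        have "\<bar>integral\<^sup>L \<nu> f - integral\<^sup>L \<nu> g\<bar> \<le> e"
          by (rule close_int[OF P\<nu> fn fg B])
        moreover have "\<bar>integral\<^sup>L \<mu> f - integral\<^sup>L \<mu> g\<bar> \<le> e"
          by (rule close_int[OF Pmu fmu fg B])
        ultimately show ?thesis using gnu e unfolding e_def by linarith
      next
        case False
        have "\<not> integrable \<nu> f"
        proof
          assume "integrable \<nu> f"
          hence "f \<in> borel_measurable \<nu>" by (rule borel_measurable_integrable)
          thus False using False measurable_cong_sets[OF S\<nu> refl, of borel] by blast
        qed
        moreover have "\<not> integrable \<mu> f"
        proof
          assume "integrable \<mu> f"
          hence "f \<in> borel_measurable \<mu>" by (rule borel_measurable_integrable)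
          thus False using False measurable_cong_sets[OF Smu refl, of borel] by blast
        qed
        ultimately
        show ?thesis using ep by (simp add: not_integrable_integral_eq)
      qed
    qed
    show "\<exists>\<nu>\<in>{\<nu>. prob_on_shift \<nu> \<and> harmonically_mixing \<nu>}. \<forall>f\<in>F. \<bar>integral\<^sup>L \<nu> f - integral\<^sup>L \<mu> f\<bar> < \<epsilon>"
      using P\<nu> S\<nu> hm close by (auto simp: prob_on_shift_def)
  qed
qed

end
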